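(* Let $k$ be an algebraically closed field of characteristic zero and let $X\subset\mathbb P^n$ be a chain of closed subvarieties $X_1,\dots,X_\ell$ with saturated ideal $I_X=\bigcap_iI_{X_i}\subset k[x_0,\dots,x_n]$, such that for integers $n_0=0<n_1<\cdots<n_\ell=n$ one has $X_i\subset\{x_0=\cdots=x_{n_{i-1}-1}=0,\ x_{n_i+1}=\cdots=x_n=0\}$. Let $T_i=\langle x_{n_{i-1}},\dots,x_{n_i-1}\rangle\langle x_{n_i+1},\dots,x_n\rangle$ for $i=1,\dots,\ell-1$. Then for any monomial order $\prec$ on $k[x_0,\dots,x_n]$, \[ \mathrm{in}_\prec(I_X)=\sum_{i=1}^\ell\langle\mathrm{in}_\prec(I_{X_i}\cap k[x_{n_{i-1}},\dots,x_{n_i}])\rangle+\sum_{i=1}^{\ell-1}T_i=\sum_{i=1}^\ell\langle\mathrm{in}_\prec(I_X\cap k[x_{n_{i-1}},\dots,x_{n_i}])\rangle+\sum_{i=1}^{\ell-1}T_i, \] where each initial ideal $\mathrm{in}_\prec(J\cap k[x_{n_{i-1}},\dots,x_{n_i}])$ is computed in $k[x_{n_{i-1}},\dots,x_{n_i}]$ with the restricted order and $\langle\cdot\rangle$ denotes the generated ideal in $k[x_0,\dots,x_n]$.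
   Context: A chain of subvarieties means $X=\bigcup_iX_i$ and $X_i\cap X_j\neq\emptyset$ iff $|i-j|=1$; $I_{X_i}$ is the saturated homogeneous ideal of $X_i$. *)

theory Defs
  imports "HOL-Library.Poly_Mapping" "HOL-Computational_Algebra.Polynomial"
begin

text \<open>Multivariate polynomials over a field: monomials are finitely supported
  exponent vectors nat =>0 nat (variable x_j has index j), polynomials are finitely
  supported coefficient functions on monomials (ring structure from Poly_Mapping).\<close>

type_synonym monom = "nat \<Rightarrow>\<^sub>0 nat"
type_synonym 'a mpoly = "monom \<Rightarrow>\<^sub>0 'a"

definition alg_closed :: "'a::field itself \<Rightarrow> bool" where
  "alg_closed _ \<longleftrightarrow> (\<forall>p::'a poly. degree p > 0 \<longrightarrow> (\<exists>x. poly p x = 0))"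

definition mvars :: "('a::zero) mpoly \<Rightarrow> nat set" where
  "mvars p = (\<Union>m\<in>Poly_Mapping.keys p. Poly_Mapping.keys (m::monom))"

definition polys_in :: "nat set \<Rightarrow> ('a::zero) mpoly set" where
  "polys_in V = {p. mvars p \<subseteq> V}"

definition monoms_in :: "nat set \<Rightarrow> monom set" where
  "monoms_in V = {m. Poly_Mapping.keys m \<subseteq> V}"

definition mdeg :: "monom \<Rightarrow> nat" where
  "mdeg m = (\<Sum>j\<in>Poly_Mapping.keys m. Poly_Mapping.lookup m j)"

definition homogeneous :: "('a::zero) mpoly \<Rightarrow> bool" where
  "homogeneous p \<longleftrightarrow> (\<forall>m\<in>Poly_Mapping.keys p. \<forall>m'\<in>Poly_Mapping.keys p. mdeg m = mdeg m')"

definition mpoly_eval :: "(nat \<Rightarrow> 'a::comm_semiring_1) \<Rightarrow> 'a mpoly \<Rightarrow> 'a" where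
  "mpoly_eval a p = (\<Sum>m\<in>Poly_Mapping.keys p. Poly_Mapping.lookup p m * (\<Prod>j\<in>Poly_Mapping.keys m. a j ^ Poly_Mapping.lookup m j))"

definition monom_poly :: "monom \<Rightarrow> ('a::{zero,one}) mpoly" where
  "monom_poly m = Poly_Mapping.single m 1"

definition var :: "nat \<Rightarrow> ('a::{zero,one}) mpoly" where
  "var j = monom_poly (Poly_Mapping.single j 1)"

definition is_ideal :: "nat \<Rightarrow> ('a::comm_ring_1) mpoly set \<Rightarrow> bool" where
  "is_ideal n I \<longleftrightarrow> I \<subseteq> polys_in {0..n} \<and> 0 \<in> I \<and>
     (\<forall>f\<in>I. \<forall>g\<in>I. f + g \<in> I) \<and> (\<forall>f\<in>I. \<forall>h\<in>polys_in {0..n}. h * f \<in> I)"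

definition ideal_gen :: "nat \<Rightarrow> ('a::comm_ring_1) mpoly set \<Rightarrow> 'a mpoly set" where
  "ideal_gen n G = \<Inter>{I. is_ideal n I \<and> G \<subseteq> I}"

text \<open>Points of P^n are represented by their nonzero homogeneous coordinate vectors
  (a j = 0 for j > n). A projective set is represented by its affine cone minus 0.\<close>
definition proj_points :: "nat \<Rightarrow> (nat \<Rightarrow> 'a::field) set" where
  "proj_points n = {a. (\<forall>j>n. a j = 0) \<and> (\<exists>j\<le>n. a j \<noteq> 0)}"

definition proj_zero_set :: "nat \<Rightarrow> ('a::field) mpoly set \<Rightarrow> (nat \<Rightarrow> 'a) set" where
  "proj_zero_set n F = {a \<in> proj_points n. \<forall>f\<in>F. mpoly_eval a f = 0}"

definition proj_closed :: "nat \<Rightarrow> (nat \<Rightarrow> 'a::field) set \<Rightarrow> bool" where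
  "proj_closed n Z \<longleftrightarrow> (\<exists>F. F \<subseteq> polys_in {0..n} \<and> (\<forall>f\<in>F. homogeneous f) \<and>
      Z = proj_zero_set n F)"

definition proj_variety :: "nat \<Rightarrow> (nat \<Rightarrow> 'a::field) set \<Rightarrow> bool" where
  "proj_variety n Z \<longleftrightarrow> proj_closed n Z \<and> Z \<noteq> {} \<and>
     (\<forall>Z1 Z2. proj_closed n Z1 \<longrightarrow> proj_closed n Z2 \<longrightarrow> Z = Z1 \<union> Z2 \<longrightarrow> Z = Z1 \<or> Z = Z2)"

definition vanishing_ideal :: "nat \<Rightarrow> (nat \<Rightarrow> 'a::field) set \<Rightarrow> 'a mpoly set" where
  "vanishing_ideal n Z = {f \<in> polys_in {0..n}. \<forall>a\<in>Z. mpoly_eval a f = 0}"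

text \<open>Monomial order on k[x_0,...,x_n]: ord a b means a \<preceq> b.\<close>
definition monomial_order :: "nat \<Rightarrow> (monom \<Rightarrow> monom \<Rightarrow> bool) \<Rightarrow> bool" where
  "monomial_order n ord \<longleftrightarrow>
     (\<forall>a\<in>monoms_in {0..n}. ord a a) \<and>
     (\<forall>a\<in>monoms_in {0..n}. \<forall>b\<in>monoms_in {0..n}. ord a b \<and> ord b a \<longrightarrow> a = b) \<and>
     (\<forall>a\<in>monoms_in {0..n}. \<forall>b\<in>monoms_in {0..n}. \<forall>c\<in>monoms_in {0..n}.
        ord a b \<and> ord b c \<longrightarrow> ord a c) \<and>
     (\<forall>a\<in>monoms_in {0..n}. \<forall>b\<in>monoms_in {0..n}. ord a b \<or> ord b a) \<and>
     (\<forall>a\<in>monoms_in {0..n}. ord 0 a) \<and>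
     (\<forall>a\<in>monoms_in {0..n}. \<forall>b\<in>monoms_in {0..n}. \<forall>c\<in>monoms_in {0..n}.
        ord a b \<longrightarrow> ord (a + c) (b + c)) \<and>
     wfP (\<lambda>a b. a \<in> monoms_in {0..n} \<and> b \<in> monoms_in {0..n} \<and> ord a b \<and> a \<noteq> b)"

definition lead_monom :: "(monom \<Rightarrow> monom \<Rightarrow> bool) \<Rightarrow> ('a::zero) mpoly \<Rightarrow> monom" where
  "lead_monom ord f = (THE m. m \<in> Poly_Mapping.keys f \<and> (\<forall>m'\<in>Poly_Mapping.keys f. ord m' m))"

text \<open>The initial ideal of J inside k[x_0..x_n] is ideal_gen n (lead_monoms ord J); for
  J \<subseteq> k[x_j : j \<in> V] the ideal of k[x_0..x_n] generated by its initial ideal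
  (computed in k[x_j : j \<in> V] with the restricted order) is the same.\<close>
definition lead_monoms :: "(monom \<Rightarrow> monom \<Rightarrow> bool) \<Rightarrow> ('a::{zero,one}) mpoly set \<Rightarrow> 'a mpoly set" where
  "lead_monoms ord J = {monom_poly (lead_monom ord f) | f. f \<in> J \<and> f \<noteq> 0}"

definition initial_ideal :: "nat \<Rightarrow> (monom \<Rightarrow> monom \<Rightarrow> bool) \<Rightarrow> ('a::comm_ring_1) mpoly set \<Rightarrow> 'a mpoly set" where
  "initial_ideal n ord J = ideal_gen n (lead_monoms ord J)"

end

theory Submission
  imports Defs
begin

context fixes n ord assumes mo: "monomial_order n ord" begin
lemma mo_refl: "a \<in> monoms_in {0..n} \<Longrightarrow> ord a a" using mo unfolding monomial_order_def by blast
lemma mo_antisym: "a \<in> monoms_in {0..n} \<Longrightarrow> b \<in> monoms_in {0..n} \<Longrightarrow> ord a b \<Longrightarrow> ord b a \<Longrightarrow> a = b"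
  using mo unfolding monomial_order_def by blast
lemma mo_trans: "a \<in> monoms_in {0..n} \<Longrightarrow> b \<in> monoms_in {0..n} \<Longrightarrow> c \<in> monoms_in {0..n} \<Longrightarrow> ord a b \<Longrightarrow> ord b c \<Longrightarrow> ord a c"
  using mo unfolding monomial_order_def by blast
lemma mo_total: "a \<in> monoms_in {0..n} \<Longrightarrow> b \<in> monoms_in {0..n} \<Longrightarrow> ord a b \<or> ord b a"
  using mo unfolding monomial_order_def by blast
end

lemma mo_max:
  assumes mo: "monomial_order n ord" and "finite K" "K \<noteq> {}" "K \<subseteq> monoms_in {0..n}"
  shows "\<exists>m\<in>K. \<forall>m'\<in>K. ord m' m"
  using assms(2-4)
proof (induction K rule: finite_ne_induct)
  case (singleton x)
  then show ?case using mo_refl[OF mo] by auto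
next
  case (insert x F)
  then obtain m where m: "m \<in> F" "\<forall>m'\<in>F. ord m' m" by auto
  have xm: "x \<in> monoms_in {0..n}" "m \<in> monoms_in {0..n}" using insert m by auto
  show ?case
  proof (cases "ord x m")
    case True
    then show ?thesis using m by auto
  next
    case False
    then have "ord m x" using mo_total[OF mo] xm by blast
    then have "\<forall>m'\<in>F. ord m' x" using m mo_trans[OF mo] xm insert.prems by blast
    then show ?thesis using mo_refl[OF mo] xm by auto
  qed
qed

lemma keys_in_monoms: "f \<in> polys_in V \<Longrightarrow> m \<in> Poly_Mapping.keys f \<Longrightarrow> m \<in> monoms_in V"
  unfolding polys_in_def monoms_in_def mvars_def by auto

lemma lead_monom_eq:
  assumes mo: "monomial_order n ord" and f: "f \<in> polys_in {0..n}"
    and M: "M \<in> Poly_Mapping.keys f" "\<forall>m'\<in>Poly_Mapping.keys f. ord m' M"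
  shows "lead_monom ord f = M"
  unfolding lead_monom_def
proof (rule the_equality)
  show "M \<in> Poly_Mapping.keys f \<and> (\<forall>m'\<in>Poly_Mapping.keys f. ord m' M)" using M by blast
  fix m assume m: "m \<in> Poly_Mapping.keys f \<and> (\<forall>m'\<in>Poly_Mapping.keys f. ord m' m)"
  have "m \<in> monoms_in {0..n}" "M \<in> monoms_in {0..n}" using m M f keys_in_monoms by blast+
  then show "m = M" using m M mo_antisym[OF mo] by blast
qed

lemma lead_monom_props:
  assumes mo: "monomial_order n ord" and f: "f \<in> polys_in {0..n}" and nz: "f \<noteq> 0"
  shows "lead_monom ord f \<in> Poly_Mapping.keys f \<and> (\<forall>m'\<in>Poly_Mapping.keys f. ord m' (lead_monom ord f))"
proof -
  obtain M where M: "M \<in> Poly_Mapping.keys f" "\<forall>m'\<in>Poly_Mapping.keys f. ord m' M"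
    using mo_max[OF mo finite_keys[of f]] nz keys_in_monoms[OF f]
    by (metis keys_eq_empty subsetI)
  then show ?thesis using lead_monom_eq[OF mo f M] by simp
qed

lemma lead_monom_sub:
  assumes mo: "monomial_order n ord" and f: "f \<in> polys_in {0..n}" and nz: "f \<noteq> 0"
    and g: "g \<in> polys_in {0..n}" and sub: "Poly_Mapping.keys g \<subseteq> Poly_Mapping.keys f"
    and L: "lead_monom ord f \<in> Poly_Mapping.keys g"
  shows "lead_monom ord g = lead_monom ord f"
  using lead_monom_eq[OF mo g L] lead_monom_props[OF mo f nz] sub by blast


abbreviation mono :: "(nat \<Rightarrow> 'a::comm_semiring_1) \<Rightarrow> monom \<Rightarrow> 'a" where
  "mono a m \<equiv> \<Prod>j\<in>Poly_Mapping.keys m. a j ^ Poly_Mapping.lookup m j"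

lemma mono_zero:
  assumes "j \<in> Poly_Mapping.keys m" "a j = 0"
  shows "mono a m = 0"
proof (rule prod_zero)
  show "finite (Poly_Mapping.keys m)" by simp
  have "Poly_Mapping.lookup m j \<noteq> 0" using assms(1) by (simp add: in_keys_iff)
  then have "a j ^ Poly_Mapping.lookup m j = 0" using assms(2) by (simp add: zero_power)
  then show "\<exists>x\<in>Poly_Mapping.keys m. a x ^ Poly_Mapping.lookup m x = 0" using assms(1) by blast
qed

definition restr :: "nat set \<Rightarrow> 'a::zero mpoly \<Rightarrow> 'a mpoly" where
  "restr B f = Poly_Mapping.mapp (\<lambda>m v. if Poly_Mapping.keys m \<subseteq> B then v else 0) f"

lemma lookup_restr: "Poly_Mapping.lookup (restr B f) m = (if Poly_Mapping.keys m \<subseteq> B then Poly_Mapping.lookup f m else 0)"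
  unfolding restr_def lookup_mapp by (auto simp: when_def in_keys_iff)

lemma keys_restr: "Poly_Mapping.keys (restr B f) = {m \<in> Poly_Mapping.keys f. Poly_Mapping.keys m \<subseteq> B}"
  by (rule set_eqI) (simp add: in_keys_iff[of _ "restr B f"] in_keys_iff[of _ f] lookup_restr)

lemma eval_restr:
  fixes f :: "'a::comm_semiring_1 mpoly"
  assumes "\<And>j. j \<notin> B \<Longrightarrow> a j = 0"
  shows "mpoly_eval a (restr B f) = mpoly_eval a f"
  unfolding mpoly_eval_def
proof (rule sum.mono_neutral_cong_left)
  show "finite (Poly_Mapping.keys f)" by simp
  show "Poly_Mapping.keys (restr B f) \<subseteq> Poly_Mapping.keys f" by (auto simp: keys_restr)
  show "\<forall>m\<in>Poly_Mapping.keys f - Poly_Mapping.keys (restr B f).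
          Poly_Mapping.lookup f m * mono a m = 0"
  proof
    fix m assume m: "m \<in> Poly_Mapping.keys f - Poly_Mapping.keys (restr B f)"
    then obtain j where "j \<in> Poly_Mapping.keys m" "j \<notin> B" by (auto simp: keys_restr)
    then have "mono a m = 0" using assms by (intro mono_zero[of j]) auto
    then show "Poly_Mapping.lookup f m * mono a m = 0" by simp
  qed
  show "\<And>m. m \<in> Poly_Mapping.keys (restr B f) \<Longrightarrow>
         Poly_Mapping.lookup (restr B f) m * mono a m = Poly_Mapping.lookup f m * mono a m"
    by (auto simp: keys_restr lookup_restr)
qed

lemma restr_polys_in: "restr B f \<in> polys_in B"
  by (auto simp: polys_in_def mvars_def keys_restr)

lemma restr_polys_in2: "f \<in> polys_in V \<Longrightarrow> restr B f \<in> polys_in V"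
  by (auto simp: polys_in_def mvars_def keys_restr)

lemma mono_scale:
  fixes a :: "nat \<Rightarrow> 'a::comm_semiring_1"
  shows "mono (\<lambda>j. t * a j) m = t ^ mdeg m * mono a m"
  by (simp add: mdeg_def power_mult_distrib prod.distrib power_sum)

lemma eval_scale_hom:
  fixes f :: "'a::comm_semiring_1 mpoly"
  assumes h: "homogeneous f" and z: "mpoly_eval a f = 0"
  shows "mpoly_eval (\<lambda>j. t * a j) f = 0"
proof (cases "Poly_Mapping.keys f = {}")
  case True then show ?thesis by (simp add: mpoly_eval_def)
next
  case False
  then obtain m0 where m0: "m0 \<in> Poly_Mapping.keys f" by blast
  have "mpoly_eval (\<lambda>j. t * a j) f = (\<Sum>m\<in>Poly_Mapping.keys f. t ^ mdeg m0 * (Poly_Mapping.lookup f m * mono a m))"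
    unfolding mpoly_eval_def mono_scale
  proof (rule sum.cong[OF refl])
    fix m assume "m \<in> Poly_Mapping.keys f"
    then have "mdeg m = mdeg m0" using h m0 unfolding homogeneous_def by blast
    then show "Poly_Mapping.lookup f m * (t ^ mdeg m * mono a m) = t ^ mdeg m0 * (Poly_Mapping.lookup f m * mono a m)"
      by (simp add: mult.left_commute)
  qed
  also have "\<dots> = t ^ mdeg m0 * mpoly_eval a f" by (simp add: mpoly_eval_def sum_distrib_left)
  finally show ?thesis using z by simp
qed

lemma proj_closed_scale:
  fixes Z :: "(nat \<Rightarrow> 'a::field) set"
  assumes "proj_closed n Z" "a \<in> Z" "t \<noteq> 0"
  shows "(\<lambda>j. t * a j) \<in> Z" "Z \<subseteq> proj_points n"
proof -
  obtain F where F: "F \<subseteq> polys_in {0..n}" "\<forall>f\<in>F. homogeneous f" "Z = proj_zero_set n F"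
    using assms(1) unfolding proj_closed_def by blast
  show "Z \<subseteq> proj_points n" using F(3) by (auto simp: proj_zero_set_def)
  have a: "a \<in> proj_points n" "\<forall>f\<in>F. mpoly_eval a f = 0" using assms(2) F(3) by (auto simp: proj_zero_set_def)
  have "(\<lambda>j. t * a j) \<in> proj_points n" using a(1) assms(3) by (auto simp: proj_points_def)
  moreover have "\<forall>f\<in>F. mpoly_eval (\<lambda>j. t * a j) f = 0" using a(2) F(2) eval_scale_hom by blast
  ultimately show "(\<lambda>j. t * a j) \<in> Z" using F(3) by (simp add: proj_zero_set_def)
qed


lemma pure_supp_eq:
  assumes "Poly_Mapping.keys (m::monom) \<subseteq> {p}" "Poly_Mapping.keys m' \<subseteq> {p}"
    "Poly_Mapping.lookup m p = Poly_Mapping.lookup m' p"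
  shows "m = m'"
proof (rule poly_mapping_eqI)
  fix k show "Poly_Mapping.lookup m k = Poly_Mapping.lookup m' k"
  proof (cases "k = p")
    case False
    then have "k \<notin> Poly_Mapping.keys m" "k \<notin> Poly_Mapping.keys m'" using assms by auto
    then show ?thesis by (simp add: in_keys_iff)
  qed (use assms in simp)
qed

lemma mono_pure:
  fixes x :: "'a::comm_semiring_1"
  shows "mono (\<lambda>j. if j = p then x else 0) m =
     (if Poly_Mapping.keys m \<subseteq> {p} then x ^ Poly_Mapping.lookup m p else 0)"
proof (cases "Poly_Mapping.keys m \<subseteq> {p}")
  case True
  then consider "Poly_Mapping.keys m = {}" | "Poly_Mapping.keys m = {p}" by blast
  then show ?thesis
  proof cases
    case 1
    then have "p \<notin> Poly_Mapping.keys m" by simp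
    then have "Poly_Mapping.lookup m p = 0" by (simp add: in_keys_iff)
    then show ?thesis using 1 by simp
  next
    case 2 then show ?thesis by simp
  qed
next
  case False
  then obtain j where "j \<in> Poly_Mapping.keys m" "j \<noteq> p" by blast
  then show ?thesis using False by (subst mono_zero[of j]) auto
qed

lemma no_pure_power:
  fixes g :: "'a::field_char_0 mpoly"
  assumes z: "\<And>x. x \<noteq> 0 \<Longrightarrow> mpoly_eval (\<lambda>j. if j = p then x else 0) g = 0"
  shows "\<forall>m\<in>Poly_Mapping.keys g. \<not> Poly_Mapping.keys m \<subseteq> {p}"
proof (rule ccontr)
  assume "\<not> ?thesis"
  then obtain m0 where m0: "m0 \<in> Poly_Mapping.keys g" "Poly_Mapping.keys m0 \<subseteq> {p}" by blast
  define S where "S = {m \<in> Poly_Mapping.keys g. Poly_Mapping.keys m \<subseteq> {p}}"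
  have finS: "finite S" unfolding S_def by simp
  define P where "P = (\<Sum>m\<in>S. Polynomial.monom (Poly_Mapping.lookup g m) (Poly_Mapping.lookup m p))"
  have evalP: "poly P x = mpoly_eval (\<lambda>j. if j = p then x else 0) g" for x
  proof -
    have "mpoly_eval (\<lambda>j. if j = p then x else 0) g =
      (\<Sum>m\<in>Poly_Mapping.keys g. if Poly_Mapping.keys m \<subseteq> {p} then Poly_Mapping.lookup g m * x ^ Poly_Mapping.lookup m p else 0)"
      unfolding mpoly_eval_def mono_pure by (rule sum.cong) auto
    also have "\<dots> = (\<Sum>m\<in>S. Poly_Mapping.lookup g m * x ^ Poly_Mapping.lookup m p)"
      unfolding S_def by (simp add: sum.inter_filter)
    also have "\<dots> = poly P x" unfolding P_def by (simp add: poly_sum poly_monom)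
    finally show ?thesis by simp
  qed
  have P0: "P = 0"
  proof (rule ccontr)
    assume "P \<noteq> 0"
    then have "finite {x. poly P x = 0}" by (rule poly_roots_finite)
    moreover have "UNIV - {0} \<subseteq> {x. poly P x = 0}" using z evalP by auto
    ultimately have "finite (UNIV - {0::'a})" by (rule finite_subset[rotated])
    then show False using infinite_UNIV_char_0[where 'a='a] by simp
  qed
  have "Polynomial.coeff P (Poly_Mapping.lookup m0 p) =
     (\<Sum>m\<in>S. if m = m0 then Poly_Mapping.lookup g m else 0)"
    unfolding P_def coeff_sum coeff_monom
  proof (rule sum.cong[OF refl])
    fix m assume "m \<in> S"
    then show "(if Poly_Mapping.lookup m p = Poly_Mapping.lookup m0 p then Poly_Mapping.lookup g m else 0) =
          (if m = m0 then Poly_Mapping.lookup g m else 0)"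
      using pure_supp_eq[of m p m0] m0 unfolding S_def by auto
  qed
  also have "\<dots> = Poly_Mapping.lookup g m0" using finS m0 unfolding S_def by simp
  finally show False using P0 m0(1) by (simp add: in_keys_iff)
qed


lemma proj_closed_pts: "proj_closed n Z \<Longrightarrow> Z \<subseteq> proj_points n"
  unfolding proj_closed_def proj_zero_set_def by auto

lemma lead_monoms_mono: "J \<subseteq> J' \<Longrightarrow> lead_monoms ord J \<subseteq> lead_monoms ord J'"
  unfolding lead_monoms_def by blast

lemma gen_sub: "G \<subseteq> ideal_gen n G"
  unfolding ideal_gen_def by blast

lemma gen_mono2: "A \<subseteq> ideal_gen n B \<Longrightarrow> ideal_gen n A \<subseteq> ideal_gen n B"
  unfolding ideal_gen_def by blast

lemma gen_mult: "x \<in> G \<Longrightarrow> h \<in> polys_in {0..n} \<Longrightarrow> h * x \<in> ideal_gen n G"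
  unfolding ideal_gen_def is_ideal_def by blast

lemma monom_poly_mult: "(monom_poly a :: 'a::comm_ring_1 mpoly) * monom_poly b = monom_poly (a + b)"
  unfolding monom_poly_def by (simp add: mult_single)

lemma keys_monom_poly: "Poly_Mapping.keys (monom_poly M :: 'a::comm_ring_1 mpoly) = {M}"
  unfolding monom_poly_def by simp

lemma monom_poly_nz: "(monom_poly M :: 'a::comm_ring_1 mpoly) \<noteq> 0"
  using keys_monom_poly[of M] by (metis empty_not_insert keys_zero)

lemma eval_monom_poly: "mpoly_eval a (monom_poly M :: 'a::comm_ring_1 mpoly) = mono a M"
  unfolding mpoly_eval_def keys_monom_poly by (simp add: monom_poly_def)

lemma monom_poly_polys_in: "Poly_Mapping.keys M \<subseteq> V \<Longrightarrow> (monom_poly M :: 'a::comm_ring_1 mpoly) \<in> polys_in V"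
  by (simp add: polys_in_def mvars_def keys_monom_poly)

lemma ns_le:
  assumes "\<And>i. i < l \<Longrightarrow> (ns::nat\<Rightarrow>nat) i < ns (Suc i)" "i \<le> j" "j \<le> l"
  shows "ns i \<le> ns j"
  using assms(2,3)
proof (induction j)
  case 0 then show ?case by simp
next
  case (Suc j)
  show ?case
  proof (cases "i = Suc j")
    case False
    then have "ns i \<le> ns j" using Suc by simp
    also have "\<dots> \<le> ns (Suc j)" using assms(1)[of j] Suc.prems by simp
    finally show ?thesis .
  qed simp
qed

lemma block_cover:
  fixes ns :: "nat \<Rightarrow> nat"
  assumes ns0: "ns 0 = 0" and nsl: "ns l = n" and l: "l \<ge> 1"
    and mono: "\<And>i. i < l \<Longrightarrow> ns i < ns (Suc i)"
    and K: "finite K" "K \<subseteq> {0..n}"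
    and nd: "\<not> (\<exists>i\<in>{1..<l}. \<exists>a\<in>K. \<exists>b\<in>K. ns (i - 1) \<le> a \<and> a < ns i \<and> ns i < b)"
  shows "\<exists>i\<in>{1..l}. K \<subseteq> {ns (i - 1)..ns i}"
proof (cases "K = {}")
  case True then show ?thesis using l by auto
next
  case False
  define a where "a = Min K"
  have aK: "a \<in> K" and amin: "\<And>b. b \<in> K \<Longrightarrow> a \<le> b" using K False unfolding a_def by auto
  have nl1: "ns (l - 1) \<le> n" using ns_le[of l ns "l - 1" l, OF mono] nsl by simp
  show ?thesis
  proof (cases "a < n")
    case False
    then have "K \<subseteq> {n..n}" using amin K by fastforce
    then show ?thesis using l nl1 nsl by (intro bexI[of _ l]) auto
  next
    case True
    define i where "i = (LEAST i. a < ns i)"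
    have ai: "a < ns i" unfolding i_def by (rule LeastI[of _ l]) (use True nsl in simp)
    have il: "i \<le> l" unfolding i_def by (rule Least_le) (use True nsl in simp)
    have i0: "i \<noteq> 0" using ai ns0 by (metis not_less0)
    have aprev: "ns (i - 1) \<le> a" using not_less_Least[of "i - 1" "\<lambda>i. a < ns i"] i0 unfolding i_def[symmetric]
      by (simp add: i_def)
    show ?thesis
    proof (cases "i = l")
      case True
      then show ?thesis using aprev amin K nsl i0 by (intro bexI[of _ l]) force+
    next
      case False
      then have "i \<in> {1..<l}" using il i0 by auto
      then have "\<forall>b\<in>K. b \<le> ns i" using nd aK aprev ai by fastforce
      then show ?thesis using aprev amin il i0 by (intro bexI[of _ i]) force+
    qed
  qed
qed

theorem corollary3p2:
  fixes n l :: nat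
    and ns :: "nat \<Rightarrow> nat"
    and Xs :: "nat \<Rightarrow> (nat \<Rightarrow> 'a::field_char_0) set"
    and ord :: "monom \<Rightarrow> monom \<Rightarrow> bool"
  assumes closed: "alg_closed TYPE('a)"
    and l_pos: "l \<ge> 1"
    and ns0: "ns 0 = 0" and nsl: "ns l = n"
    and ns_mono: "\<And>i. i < l \<Longrightarrow> ns i < ns (Suc i)"
    and var: "\<And>i. i \<in> {1..l} \<Longrightarrow> proj_variety n (Xs i)"
    and chain: "\<And>i j. i \<in> {1..l} \<Longrightarrow> j \<in> {1..l} \<Longrightarrow> i \<noteq> j \<Longrightarrow>
                  (Xs i \<inter> Xs j \<noteq> {} \<longleftrightarrow> (i = Suc j \<or> j = Suc i))"
    and coords: "\<And>i a. i \<in> {1..l} \<Longrightarrow> a \<in> Xs i \<Longrightarrow>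
                  (\<forall>j<ns (i - 1). a j = 0) \<and> (\<forall>j. ns i < j \<and> j \<le> n \<longrightarrow> a j = 0)"
    and mo: "monomial_order n ord"
  defines "IX \<equiv> vanishing_ideal n (\<Union>i\<in>{1..l}. Xs i)"
    and "Tgens \<equiv> (\<Union>i\<in>{1..<l}. {var a * var b | a b.
                    ns (i - 1) \<le> a \<and> a < ns i \<and> ns i < b \<and> b \<le> n})"
  shows "initial_ideal n ord IX =
           ideal_gen n ((\<Union>i\<in>{1..l}. lead_monoms ord
               (vanishing_ideal n (Xs i) \<inter> polys_in {ns (i - 1)..ns i})) \<union> Tgens)
      \<and> initial_ideal n ord IX =
           ideal_gen n ((\<Union>i\<in>{1..l}. lead_monoms ord
               (IX \<inter> polys_in {ns (i - 1)..ns i})) \<union> Tgens)"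
  proof -
  define B where "B i = {ns (i - 1)..ns i}" for i
  have nsle: "\<And>i j. i \<le> j \<Longrightarrow> j \<le> l \<Longrightarrow> ns i \<le> ns j"
    using ns_le[of l ns, OF ns_mono] by blast
  have nslt: "\<And>i j. i < j \<Longrightarrow> j \<le> l \<Longrightarrow> ns i < ns j"
  proof -
    fix i j :: nat assume "i < j" "j \<le> l"
    then have "ns i < ns (Suc i)" "ns (Suc i) \<le> ns j" using ns_mono nsle by auto
    then show "ns i < ns j" by simp
  qed
  have pcl: "\<And>i. i \<in> {1..l} \<Longrightarrow> proj_closed n (Xs i)"
    using var unfolding proj_variety_def by blast
  have pts: "\<And>i. i \<in> {1..l} \<Longrightarrow> Xs i \<subseteq> proj_points n"
    using proj_closed_pts pcl by blast
  have supp: "\<And>i a k. i \<in> {1..l} \<Longrightarrow> a \<in> Xs i \<Longrightarrow> a k \<noteq> 0 \<Longrightarrow> ns (i - 1) \<le> k \<and> k \<le> ns i"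
  proof -
    fix i a k assume i: "i \<in> {1..l}" and a: "a \<in> Xs i" and ak: "a k \<noteq> 0"
    have "a \<in> proj_points n" using pts[OF i] a by blast
    then have kn: "k \<le> n" using ak unfolding proj_points_def by (cases "k \<le> n") auto
    have c: "\<forall>j<ns (i - 1). a j = 0" "\<forall>j. ns i < j \<and> j \<le> n \<longrightarrow> a j = 0" using coords[OF i a] by blast+
    show "ns (i - 1) \<le> k \<and> k \<le> ns i"
    proof (intro conjI; rule ccontr)
      assume "\<not> ns (i - 1) \<le> k" then show False using c(1) ak by simp
    next
      assume "\<not> k \<le> ns i" then show False using c(2) ak kn by simp
    qed
  qed
  have IXsub: "IX \<subseteq> polys_in {0..n}" unfolding IX_def vanishing_ideal_def by blast
  have pure: "\<forall>m\<in>Poly_Mapping.keys g. \<not> Poly_Mapping.keys m \<subseteq> {p}"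
    if i: "i \<in> {1..l}" and g: "g \<in> vanishing_ideal n (Xs i)" and b: "b \<in> Xs i"
      and bs: "\<And>k. b k \<noteq> 0 \<Longrightarrow> k = p" for i g p b
  proof (rule no_pure_power)
    have "b \<in> proj_points n" using pts[OF i] b by blast
    then obtain k where "b k \<noteq> 0" unfolding proj_points_def by blast
    then have bp: "b p \<noteq> 0" using bs by metis
    fix x :: 'a assume x: "x \<noteq> 0"
    have "(\<lambda>j. (x / b p) * b j) \<in> Xs i" using proj_closed_scale(1)[OF pcl[OF i] b, of "x / b p"] x bp by simp
    moreover have "(\<lambda>j. (x / b p) * b j) = (\<lambda>j. if j = p then x else 0)"
    proof
      fix j show "(x / b p) * b j = (if j = p then x else 0)"
      proof (cases "j = p")
        case False
        then have "b j = 0" using bs by blast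
        then show ?thesis using False by simp
      qed (use bp in simp)
    qed
    ultimately have "(\<lambda>j. if j = p then x else 0) \<in> Xs i" by simp
    then show "mpoly_eval (\<lambda>j. if j = p then x else 0) g = 0"
      using g unfolding vanishing_ideal_def by blast
  qed
  have A: "g \<in> IX" if i: "i \<in> {1..l}" and g: "g \<in> vanishing_ideal n (Xs i)" and gB: "g \<in> polys_in (B i)" for i g
  proof -
    have g0: "g \<in> polys_in {0..n}" using g unfolding vanishing_ideal_def by blast
    have gkeys: "\<And>m k. m \<in> Poly_Mapping.keys g \<Longrightarrow> k \<in> Poly_Mapping.keys m \<Longrightarrow> k \<in> B i"
      using gB unfolding polys_in_def mvars_def by blast
    have "mpoly_eval a g = 0" if j: "j \<in> {1..l}" and a: "a \<in> Xs j" for j a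
    proof (cases "j = i")
      case True then show ?thesis using g a unfolding vanishing_ideal_def by blast
    next
      case False
      have "\<exists>p. (\<forall>m\<in>Poly_Mapping.keys g. \<not> Poly_Mapping.keys m \<subseteq> {p}) \<and>
               (\<forall>k\<in>B i. k \<noteq> p \<longrightarrow> a k = 0)"
      proof (cases "i < j")
        case True
        have si: "Suc i \<in> {1..l}" using True j by auto
        have "Xs i \<inter> Xs (Suc i) \<noteq> {}" using chain[OF i si n_not_Suc_n] by simp
        then obtain b where b: "b \<in> Xs i" "b \<in> Xs (Suc i)" by blast
        have bs: "b k \<noteq> 0 \<Longrightarrow> k = ns i" for k using supp[OF i b(1), of k] supp[OF si b(2), of k] by simp
        have "\<forall>k\<in>B i. k \<noteq> ns i \<longrightarrow> a k = 0"
        proof (intro ballI impI)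
          fix k assume "k \<in> B i" "k \<noteq> ns i"
          then have "k < ns i" unfolding B_def by auto
          moreover have "ns i \<le> ns (j - 1)" using True j by (intro nsle) auto
          ultimately show "a k = 0" using supp[OF j a, of k] by linarith
        qed
        then show ?thesis using pure[OF i g b(1) bs] by blast
      next
        case False
        then have ji: "j < i" using \<open>j \<noteq> i\<close> by simp
        have pi: "i - 1 \<in> {1..l}" and ipi: "i = Suc (i - 1)" using ji j i by auto
        have "i \<noteq> i - 1" using ji by simp
        then have "Xs i \<inter> Xs (i - 1) \<noteq> {}" using chain[OF i pi] ipi by simp
        then obtain b where b: "b \<in> Xs i" "b \<in> Xs (i - 1)" by blast
        have "ns (i - 1 - 1) \<le> ns (i - 1)" by (rule nsle) (use i in auto)
        then have bs: "b k \<noteq> 0 \<Longrightarrow> k = ns (i - 1)" for k using supp[OF i b(1), of k] supp[OF pi b(2), of k] by simp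
        have "\<forall>k\<in>B i. k \<noteq> ns (i - 1) \<longrightarrow> a k = 0"
        proof (intro ballI impI)
          fix k assume "k \<in> B i" "k \<noteq> ns (i - 1)"
          then have "ns (i - 1) < k" unfolding B_def by auto
          moreover have "ns j \<le> ns (i - 1)" using ji i by (intro nsle) auto
          ultimately show "a k = 0" using supp[OF j a, of k] by linarith
        qed
        then show ?thesis using pure[OF i g b(1) bs] by blast
      qed
      then obtain p where p: "\<forall>m\<in>Poly_Mapping.keys g. \<not> Poly_Mapping.keys m \<subseteq> {p}"
        "\<forall>k\<in>B i. k \<noteq> p \<longrightarrow> a k = 0" by blast
      have mz: "mono a m = 0" if m: "m \<in> Poly_Mapping.keys g" for m
      proof -
        obtain k where k: "k \<in> Poly_Mapping.keys m" "k \<noteq> p" using p(1) m by blast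
        then have "a k = 0" using p(2) gkeys[OF m k(1)] by blast
        then show ?thesis using mono_zero k(1) by blast
      qed
      show ?thesis unfolding mpoly_eval_def by (intro sum.neutral ballI) (simp only: mz mult_zero_right)
    qed
    then show ?thesis unfolding IX_def vanishing_ideal_def using g0 by blast
  qed
  have TL: "Tgens \<subseteq> lead_monoms ord IX"
  proof
    fix t assume "t \<in> Tgens"
    then obtain i a b where i: "i \<in> {1..<l}" and t: "t = var a * var b"
      and ab: "ns (i - 1) \<le> a" "a < ns i" "ns i < b" "b \<le> n"
      unfolding Tgens_def by blast
    define M where "M = Poly_Mapping.single a (1::nat) + Poly_Mapping.single b 1"
    have tM: "t = monom_poly M" unfolding t M_def var_def monom_poly_mult ..
    have ane: "a \<noteq> b" using ab by simp
    have keysM: "Poly_Mapping.keys M = {a, b}"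
    proof (rule set_eqI)
      fix k
      show "k \<in> Poly_Mapping.keys M \<longleftrightarrow> k \<in> {a, b}"
      proof -
        have lk: "Poly_Mapping.lookup M k = ((1::nat) when a = k) + (1 when b = k)"
          unfolding M_def lookup_add lookup_single ..
        have "k \<in> Poly_Mapping.keys M \<longleftrightarrow> Poly_Mapping.lookup M k \<noteq> 0" by (rule in_keys_iff)
        then show ?thesis unfolding lk using ane by (cases "k = a"; cases "k = b") (auto simp: when_def)
      qed
    qed
    have Mn: "M \<in> monoms_in {0..n}" using keysM ab unfolding monoms_in_def by auto
    have tpol: "t \<in> polys_in {0..n}" unfolding tM by (rule monom_poly_polys_in) (use keysM ab in auto)
    have tvan: "mpoly_eval x t = 0" if j: "j \<in> {1..l}" and x: "x \<in> Xs j" for j x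
    proof -
      have "x a = 0 \<or> x b = 0"
      proof (cases "j \<le> i")
        case True
        have "ns j \<le> ns i" using True i by (intro nsle) auto
        then show ?thesis using supp[OF j x, of b] ab by auto
      next
        case False
        have "ns i \<le> ns (j - 1)" using False j by (intro nsle) auto
        then show ?thesis using supp[OF j x, of a] ab by auto
      qed
      moreover have "a \<in> Poly_Mapping.keys M" "b \<in> Poly_Mapping.keys M" using keysM by auto
      ultimately have "mono x M = 0" using mono_zero[of a M x] mono_zero[of b M x] by blast
      then show ?thesis unfolding tM eval_monom_poly .
    qed
    have "t \<in> IX" unfolding IX_def vanishing_ideal_def using tpol tvan by blast
    moreover have "lead_monom ord t = M"
      by (rule lead_monom_eq[OF mo tpol]) (simp_all add: tM keys_monom_poly mo_refl[OF mo Mn])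
    moreover have "t \<noteq> 0" using tM monom_poly_nz by simp
    ultimately show "t \<in> lead_monoms ord IX" unfolding lead_monoms_def
      by (intro CollectI exI[of _ t] conjI) (simp_all add: tM)
  qed
  define G1 where "G1 = (\<Union>i\<in>{1..l}. lead_monoms ord
               (vanishing_ideal n (Xs i) \<inter> polys_in {ns (i - 1)..ns i})) \<union> Tgens"
  define G2 where "G2 = (\<Union>i\<in>{1..l}. lead_monoms ord
               (IX \<inter> polys_in {ns (i - 1)..ns i})) \<union> Tgens"
  have G12: "G1 \<subseteq> G2"
  proof -
    have "lead_monoms ord (vanishing_ideal n (Xs i) \<inter> polys_in {ns (i - 1)..ns i})
       \<subseteq> lead_monoms ord (IX \<inter> polys_in {ns (i - 1)..ns i})" if "i \<in> {1..l}" for i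
    proof (rule lead_monoms_mono)
      show "vanishing_ideal n (Xs i) \<inter> polys_in {ns (i - 1)..ns i} \<subseteq> IX \<inter> polys_in {ns (i - 1)..ns i}"
        using A[OF that] unfolding B_def by blast
    qed
    then show ?thesis unfolding G1_def G2_def by blast
  qed
  have G2L: "G2 \<subseteq> lead_monoms ord IX"
    unfolding G2_def using TL lead_monoms_mono[of "IX \<inter> _" IX ord] by blast
  have LG1: "lead_monoms ord IX \<subseteq> ideal_gen n G1"
  proof
    fix t assume "t \<in> lead_monoms ord IX"
    then obtain f where f: "f \<in> IX" "f \<noteq> 0" and t: "t = monom_poly (lead_monom ord f)"
      unfolding lead_monoms_def by blast
    define M where "M = lead_monom ord f"
    have f0: "f \<in> polys_in {0..n}" using f IXsub by blast
    have MK: "M \<in> Poly_Mapping.keys f" using lead_monom_props[OF mo f0 f(2)] unfolding M_def by blast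
    have Mn: "Poly_Mapping.keys M \<subseteq> {0..n}" using keys_in_monoms[OF f0 MK] unfolding monoms_in_def by simp
    show "t \<in> ideal_gen n G1"
    proof (cases "\<exists>i\<in>{1..<l}. \<exists>a\<in>Poly_Mapping.keys M. \<exists>b\<in>Poly_Mapping.keys M.
                   ns (i - 1) \<le> a \<and> a < ns i \<and> ns i < b")
      case True
      then obtain i a b where i: "i \<in> {1..<l}" and abM: "a \<in> Poly_Mapping.keys M" "b \<in> Poly_Mapping.keys M"
        and ab: "ns (i - 1) \<le> a" "a < ns i" "ns i < b" by blast
      have bn: "b \<le> n" using abM Mn by auto
      have vab: "var a * var b \<in> G1" unfolding G1_def Tgens_def using i ab bn by blast
      define M' where "M' = M - Poly_Mapping.single a 1 - Poly_Mapping.single b 1"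
      have la: "Poly_Mapping.lookup M a \<ge> 1" "Poly_Mapping.lookup M b \<ge> 1" using abM by (auto simp: in_keys_iff)
      have ane: "a \<noteq> b" using ab by simp
      have MM': "M = M' + (Poly_Mapping.single a 1 + Poly_Mapping.single b 1)"
      proof (rule poly_mapping_eqI)
        fix k show "Poly_Mapping.lookup M k = Poly_Mapping.lookup (M' + (Poly_Mapping.single a 1 + Poly_Mapping.single b 1)) k"
          unfolding M'_def using la ane by (auto simp: lookup_add lookup_minus lookup_single when_def)
      qed
      have kM': "Poly_Mapping.keys M' \<subseteq> Poly_Mapping.keys M"
        unfolding M'_def by (auto simp: in_keys_iff lookup_minus)
      have "(monom_poly M' :: 'a mpoly) \<in> polys_in {0..n}" by (rule monom_poly_polys_in) (use kM' Mn in blast)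
      then have "monom_poly M' * (var a * var b) \<in> ideal_gen n G1" using vab by (rule gen_mult[rotated])
      moreover have "monom_poly M' * (var a * var b) = t"
        unfolding t M_def[symmetric] var_def monom_poly_mult MM' ..
      ultimately show ?thesis by simp
    next
      case False
      obtain i where i: "i \<in> {1..l}" and MB: "Poly_Mapping.keys M \<subseteq> B i"
        using block_cover[OF ns0 nsl l_pos ns_mono finite_keys Mn False] unfolding B_def by blast
      define g where "g = restr (B i) f"
      have g0: "g \<in> polys_in {0..n}" unfolding g_def by (rule restr_polys_in2[OF f0])
      have gB: "g \<in> polys_in (B i)" unfolding g_def by (rule restr_polys_in)
      have Mg: "M \<in> Poly_Mapping.keys g" using MK MB unfolding g_def keys_restr by blast
      have gnz: "g \<noteq> 0" using Mg by auto
      have gvan: "mpoly_eval a g = 0" if a: "a \<in> Xs i" for a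
      proof -
        have "mpoly_eval a g = mpoly_eval a f" unfolding g_def
        proof (rule eval_restr)
          fix j assume "j \<notin> B i"
          then show "a j = 0" using supp[OF i a, of j] unfolding B_def by (cases "a j = 0") auto
        qed
        also have "\<dots> = 0" using f(1) a i unfolding IX_def vanishing_ideal_def by blast
        finally show ?thesis .
      qed
      have "lead_monom ord g = M" unfolding M_def
        by (rule lead_monom_sub[OF mo f0 f(2) g0]) (use Mg in \<open>auto simp: g_def keys_restr M_def\<close>)
      then have "t \<in> lead_monoms ord (vanishing_ideal n (Xs i) \<inter> polys_in {ns (i - 1)..ns i})"
        unfolding lead_monoms_def t M_def[symmetric] using g0 gB gvan gnz
        unfolding vanishing_ideal_def B_def by blast
      then have "t \<in> G1" unfolding G1_def using i by blast
      then show ?thesis using gen_sub by blast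
    qed
  qed
  have e1: "ideal_gen n (lead_monoms ord IX) \<subseteq> ideal_gen n G1" by (rule gen_mono2[OF LG1])
  have e2: "ideal_gen n G1 \<subseteq> ideal_gen n G2" using G12 gen_sub by (intro gen_mono2) blast
  have e3: "ideal_gen n G2 \<subseteq> ideal_gen n (lead_monoms ord IX)" using G2L gen_sub by (intro gen_mono2) blast
  show ?thesis unfolding initial_ideal_def G1_def[symmetric] G2_def[symmetric]
    using e1 e2 e3 by blast
qed

end
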